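(* Fix a constant $a\ge1$. There is a constant $C=C(a)$ such that every $k$-terminal network $G=(V,E,T,c)$ with $n=|V|$ and integer weights $c:E\to\{1,\dots,n^{a}\}$ admits a terminal-cuts scheme with storage of at most $C\,|\mathcal{T}_e(G)|\,(k+\log n)$ bits; that is, there is a bit string $M=P(G)$ of that length and a procedure $R$ such that $R(S,M)=\mathrm{mincut}_G(S)$ for every $S\subset T$ with $S\neq\emptyset,T$, where $R$ uses only $S$ and $M$ (not $G$).
   Context: A $k$-terminal network $G=(V,E,T,c)$ is a finite connected undirected graph $(V,E)$ with edge weights $c$ and a set $T\subseteq V$ of $|T|=k$ terminals. For $W\subseteq V$ let $\delta(W)$ be the set of edges with exactly one endpoint in $W$. For $S\subset T$ with $S\neq\emptyset,T$, $\mathrm{mincut}_G(S)$ is the minimum of $\sum_{e\in\delta(W)}c(e)$ over all $W$ with $W\cap T\in\{S,T\setminus S\}$; the minimizing cutset is assumed unique (consistent tie-breaking) and denoted $E_S$. $CC(F)$ denotes the set of connected components of $(V,E\setminus F)$, and $\mathcal{T}_e(G)=\{S\subset T:\ S\neq\emptyset,T,\ |CC(E_S)|=2\}$. A terminal-cuts scheme consists of a preprocessing map $P$ taking $G$ to a memory $M$ and a query procedure $R$ which, given $S$ and $M$ but without access to $G$, outputs $\mathrm{mincut}_G(S)$. *)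

theory Defs
  imports Complex_Main "HOL-Library.Nat_Bijection"
begin

text \<open>Networks: vertices are natural numbers, V a finite vertex set, undirected edges are
  stored as pairs (u,v) with u < v, terminals are T = {0..<k}.\<close>

definition und :: "(nat \<times> nat) set \<Rightarrow> (nat \<times> nat) set" where
  "und F = {(u,v). (u,v) \<in> F \<or> (v,u) \<in> F}"

definition connected_graph :: "nat set \<Rightarrow> (nat \<times> nat) set \<Rightarrow> bool" where
  "connected_graph V E \<longleftrightarrow> (\<forall>u\<in>V. \<forall>v\<in>V. (u,v) \<in> (und E)\<^sup>*)"

definition network :: "nat set \<Rightarrow> (nat \<times> nat) set \<Rightarrow> nat \<Rightarrow> bool" where
  "network V E k \<longleftrightarrow> finite V \<and> V \<noteq> {} \<and> E \<subseteq> {(u,v). u < v \<and> u \<in> V \<and> v \<in> V}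
     \<and> {0..<k} \<subseteq> V \<and> connected_graph V E"

definition delta :: "(nat \<times> nat) set \<Rightarrow> nat set \<Rightarrow> (nat \<times> nat) set" where
  "delta E W = {e \<in> E. (fst e \<in> W) \<noteq> (snd e \<in> W)}"

definition cut_cost :: "(nat \<times> nat \<Rightarrow> nat) \<Rightarrow> (nat \<times> nat) set \<Rightarrow> nat" where
  "cut_cost c F = (\<Sum>e\<in>F. c e)"

definition cutsets :: "nat set \<Rightarrow> (nat \<times> nat) set \<Rightarrow> nat set \<Rightarrow> nat set \<Rightarrow> (nat \<times> nat) set set" where
  "cutsets V E T S = {delta E W | W. W \<subseteq> V \<and> (W \<inter> T = S \<or> W \<inter> T = T - S)}"

definition mincut :: "nat set \<Rightarrow> (nat \<times> nat) set \<Rightarrow> nat set \<Rightarrow> (nat \<times> nat \<Rightarrow> nat) \<Rightarrow> nat set \<Rightarrow> nat" where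
  "mincut V E T c S = Min (cut_cost c ` cutsets V E T S)"

text \<open>Consistent tie-breaking by perturbation: among minimum cutsets choose the one
  minimising the injective key sum of 2^(index e) over its edges.\<close>
definition tie_key :: "(nat \<times> nat) set \<Rightarrow> nat" where
  "tie_key F = (\<Sum>e\<in>F. 2 ^ prod_encode e)"

definition min_cutsets :: "nat set \<Rightarrow> (nat \<times> nat) set \<Rightarrow> nat set \<Rightarrow> (nat \<times> nat \<Rightarrow> nat) \<Rightarrow> nat set \<Rightarrow> (nat \<times> nat) set set" where
  "min_cutsets V E T c S = {F \<in> cutsets V E T S. cut_cost c F = mincut V E T c S}"

definition cutset_E :: "nat set \<Rightarrow> (nat \<times> nat) set \<Rightarrow> nat set \<Rightarrow> (nat \<times> nat \<Rightarrow> nat) \<Rightarrow> nat set \<Rightarrow> (nat \<times> nat) set" where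
  "cutset_E V E T c S = (THE F. F \<in> min_cutsets V E T c S \<and>
      (\<forall>F' \<in> min_cutsets V E T c S. tie_key F \<le> tie_key F'))"

definition CC :: "nat set \<Rightarrow> (nat \<times> nat) set \<Rightarrow> (nat \<times> nat) set \<Rightarrow> nat set set" where
  "CC V E F = V // {(u,v). u \<in> V \<and> v \<in> V \<and> (u,v) \<in> (und (E - F))\<^sup>*}"

definition Te :: "nat set \<Rightarrow> (nat \<times> nat) set \<Rightarrow> nat set \<Rightarrow> (nat \<times> nat \<Rightarrow> nat) \<Rightarrow> nat set set" where
  "Te V E T c = {S. S \<subseteq> T \<and> S \<noteq> {} \<and> S \<noteq> T \<and> card (CC V E (cutset_E V E T c S)) = 2}"

end

theory Submission
  imports Defs
begin


fun bits :: "nat \<Rightarrow> bool list" where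
  "bits n = (if n = 0 then [] else bits (n div 2) @ [odd n])"
declare bits.simps[simp del]

definition from_bits :: "bool list \<Rightarrow> nat" where
  "from_bits xs = foldl (\<lambda>a b. 2*a + (if b then 1 else 0)) 0 xs"

lemma from_bits_snoc: "from_bits (xs @ [b]) = 2 * from_bits xs + (if b then 1 else 0)"
  by (simp add: from_bits_def)

lemma from_bits_bits: "from_bits (bits n) = n"
proof (induction n rule: bits.induct)
  case (1 n)
  show ?case
  proof (cases "n = 0")
    case True then show ?thesis by (simp add: bits.simps from_bits_def)
  next
    case False
    then have "bits n = bits (n div 2) @ [odd n]" by (simp add: bits.simps)
    then show ?thesis using 1 False by (simp add: from_bits_snoc)
  qed
qed

lemma bits_inj: "bits x = bits y \<Longrightarrow> x = y"
  by (metis from_bits_bits)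

lemma bits_len_less: "n < 2^m \<Longrightarrow> length (bits n) \<le> m"
proof (induction n arbitrary: m rule: bits.induct)
  case (1 n)
  show ?case
  proof (cases "n = 0")
    case True then show ?thesis by (simp add: bits.simps)
  next
    case False
    then obtain m' where m: "m = Suc m'" using 1(2) by (cases m) auto
    have "n div 2 < 2^m'" using 1(2) m by auto
    then have "length (bits (n div 2)) \<le> m'" using 1(1) False by blast
    then show ?thesis using False m by (simp add: bits.simps)
  qed
qed

lemma bits_len_pow: "n \<ge> 1 \<Longrightarrow> 2 ^ length (bits n) \<le> 2 * n"
proof (induction n rule: bits.induct)
  case (1 n)
  have b: "bits n = bits (n div 2) @ [odd n]" using 1(2) by (simp add: bits.simps)
  show ?case
  proof (cases "n div 2 = 0")
    case True
    then have "n = 1" using 1(2) by auto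
    then show ?thesis by (simp add: bits.simps)
  next
    case False
    then have "2 ^ length (bits (n div 2)) \<le> 2 * (n div 2)" using 1 by auto
    then show ?thesis using b by simp
  qed
qed

lemma bits_len_log: "n \<ge> 1 \<Longrightarrow> real (length (bits n)) \<le> log 2 (real n) + 1"
proof -
  assume n: "n \<ge> 1"
  have "(2::real) ^ length (bits n) \<le> 2 * real n"
    using bits_len_pow[OF n] by (metis of_nat_le_iff of_nat_mult of_nat_numeral of_nat_power)
  then have "log 2 ((2::real) ^ length (bits n)) \<le> log 2 (2 * real n)"
    using n by (subst log_le_cancel_iff) auto
  then show ?thesis using n by (simp add: log_mult)
qed

definition gcode :: "nat \<Rightarrow> bool list" where
  "gcode x = replicate (length (bits x)) True @ False # bits x"

definition gcodes :: "nat list \<Rightarrow> bool list" where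
  "gcodes L = concat (map gcode L)"

lemma rep_prefix: "replicate m True @ False # r = replicate m' True @ False # r' \<Longrightarrow> m = m' \<and> r = r'"
proof (induction m arbitrary: m')
  case 0 then show ?case by (cases m') auto
next
  case (Suc m) then show ?case by (cases m') auto
qed

lemma gcode_prefix: "gcode x @ s = gcode y @ s' \<Longrightarrow> x = y \<and> s = s'"
proof -
  assume h: "gcode x @ s = gcode y @ s'"
  then have "replicate (length (bits x)) True @ False # (bits x @ s) =
             replicate (length (bits y)) True @ False # (bits y @ s')"
    by (simp add: gcode_def)
  from rep_prefix[OF this] have l: "length (bits x) = length (bits y)"
    and e: "bits x @ s = bits y @ s'" by auto
  from e l have "bits x = bits y \<and> s = s'" by (simp add: append_eq_append_conv)
  then show ?thesis using bits_inj by blast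
qed

lemma gcodes_inj: "gcodes L = gcodes L' \<Longrightarrow> L = L'"
proof (induction L arbitrary: L')
  case Nil then show ?case by (cases L') (auto simp: gcodes_def gcode_def)
next
  case (Cons x L)
  then obtain y L'' where L': "L' = y # L''" by (cases L') (auto simp: gcodes_def gcode_def)
  then have "gcode x @ gcodes L = gcode y @ gcodes L''" using Cons(2) by (simp add: gcodes_def)
  from gcode_prefix[OF this] Cons(1) L' show ?case by auto
qed

lemma length_gcodes: "length (gcodes L) = (\<Sum>x\<leftarrow>L. 2 * length (bits x) + 1)"
  by (induction L) (auto simp: gcodes_def gcode_def)



lemma und_sym: "(u,v) \<in> und X \<Longrightarrow> (v,u) \<in> und X"
  by (auto simp: und_def)

lemma rtrancl_und_sym: "(u,v) \<in> (und X)\<^sup>* \<Longrightarrow> (v,u) \<in> (und X)\<^sup>*"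
proof (induction rule: rtrancl_induct)
  case base then show ?case by simp
next
  case (step y z)
  then show ?case by (meson converse_rtrancl_into_rtrancl und_sym)
qed

definition Rel :: "nat set \<Rightarrow> (nat \<times> nat) set \<Rightarrow> (nat \<times> nat) set \<Rightarrow> (nat \<times> nat) set" where
  "Rel V E F = {(u,v). u \<in> V \<and> v \<in> V \<and> (u,v) \<in> (und (E - F))\<^sup>*}"

lemma CC_Rel: "CC V E F = V // Rel V E F"
  by (simp add: CC_def Rel_def)

lemma Rel_equiv: "equiv V (Rel V E F)"
proof (rule equivI)
  show "Rel V E F \<subseteq> V \<times> V" by (auto simp: Rel_def)
  show "refl_on V (Rel V E F)" by (auto simp: refl_on_def Rel_def)
  show "sym (Rel V E F)" by (rule symI) (auto simp: Rel_def intro: rtrancl_und_sym)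
  show "trans (Rel V E F)" by (rule transI) (auto simp: Rel_def)
qed

lemma set_encode_lt: "S \<subseteq> {0..<k} \<Longrightarrow> set_encode S < 2^k"
proof (induction k arbitrary: S)
  case 0 then show ?case by simp
next
  case (Suc k)
  have fin: "finite (S - {k})" using Suc(2) finite_subset by blast
  have "S - {k} \<subseteq> {0..<k}" using Suc.prems by auto
  then have 1: "set_encode (S - {k}) < 2^k" using Suc.IH by blast
  show ?case
  proof (cases "k \<in> S")
    case True
    then have "S = insert k (S - {k})" by auto
    then have "set_encode S = 2^k + set_encode (S - {k})"
      using fin by (metis Diff_iff insertI1 set_encode_insert)
    then show ?thesis using 1 by simp
  next
    case False
    then have "S = S - {k}" by auto
    then have "set_encode S < 2^k" using 1 by simp
    then show ?thesis by simp
  qed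
qed

lemma ntriv: "S \<subseteq> {0..<k::nat} \<Longrightarrow> S \<noteq> {} \<Longrightarrow> S \<noteq> {0..<k} \<Longrightarrow> X = S \<or> X = {0..<k} - S \<Longrightarrow> X \<noteq> {0..<k} \<and> X \<noteq> {}"
  by auto

inductive ach :: "nat \<Rightarrow> (nat set \<times> nat) set \<Rightarrow> nat set \<Rightarrow> nat \<Rightarrow> bool" for k P where
  base: "(X,v) \<in> P \<Longrightarrow> ach k P X v"
| compl: "ach k P X v \<Longrightarrow> ach k P ({0..<k} - X) v"
| union: "ach k P X v \<Longrightarrow> ach k P Y w \<Longrightarrow> X \<union> Y \<noteq> {0..<k} \<Longrightarrow> ach k P (X \<union> Y) (v + w)"

context
  fixes V :: "nat set" and E :: "(nat \<times> nat) set" and k :: nat and c :: "nat \<times> nat \<Rightarrow> nat"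
  assumes net: "network V E k" and wt: "\<forall>e\<in>E. 1 \<le> c e"
begin

lemma finV: "finite V" using net by (simp add: network_def)
lemma edge_in: "e \<in> E \<Longrightarrow> fst e \<in> V \<and> snd e \<in> V" using net by (auto simp: network_def)
lemma Esub: "E \<subseteq> V \<times> V" using edge_in by force
lemma finE: "finite E" using Esub finV finite_subset by blast
lemma Tsub: "{0..<k} \<subseteq> V" using net by (simp add: network_def)
lemma conn: "u \<in> V \<Longrightarrow> v \<in> V \<Longrightarrow> (u,v) \<in> (und E)\<^sup>*"
  using net by (simp add: network_def connected_graph_def)

lemma delta_sub: "delta E W \<subseteq> E" by (auto simp: delta_def)
lemma fin_delta: "finite (delta E W)" using finE delta_sub finite_subset by blast

lemma delta_compl: "delta E (V - W) = delta E W"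
  unfolding delta_def using edge_in by auto

lemma cost_mono: "F \<subseteq> G \<Longrightarrow> finite G \<Longrightarrow> cut_cost c F \<le> cut_cost c G"
  unfolding cut_cost_def by (simp add: sum_mono2)

lemma cost_union: "finite F \<Longrightarrow> finite G \<Longrightarrow> cut_cost c (F \<union> G) \<le> cut_cost c F + cut_cost c G"
  unfolding cut_cost_def by (simp add: sum_Un_nat)

lemma cutsets_fin: "finite (cutsets V E {0..<k} S)"
proof -
  have "cutsets V E {0..<k} S \<subseteq> (delta E) ` Pow V" unfolding cutsets_def by blast
  then show ?thesis using finV finite_subset by blast
qed

lemma cutsets_ne: "S \<subseteq> {0..<k} \<Longrightarrow> delta E S \<in> cutsets V E {0..<k} S"
  unfolding cutsets_def using Tsub by auto

lemma cutsets_sub: "F \<in> cutsets V E {0..<k} S \<Longrightarrow> F \<subseteq> E"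
  unfolding cutsets_def using delta_sub by auto

lemma mincut_le: "W \<subseteq> V \<Longrightarrow> W \<inter> {0..<k} = S \<or> W \<inter> {0..<k} = {0..<k} - S \<Longrightarrow>
   mincut V E {0..<k} c S \<le> cut_cost c (delta E W)"
proof -
  assume "W \<subseteq> V" "W \<inter> {0..<k} = S \<or> W \<inter> {0..<k} = {0..<k} - S"
  then have "delta E W \<in> cutsets V E {0..<k} S" unfolding cutsets_def by blast
  then show ?thesis unfolding mincut_def by (rule Min_le[OF finite_imageI[OF cutsets_fin] imageI])
qed

lemma mincut_in: "S \<subseteq> {0..<k} \<Longrightarrow> mincut V E {0..<k} c S \<in> cut_cost c ` cutsets V E {0..<k} S"
  unfolding mincut_def using cutsets_ne by (intro Min_in finite_imageI cutsets_fin) blast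

lemma mincut_att: "S \<subseteq> {0..<k} \<Longrightarrow> \<exists>W\<subseteq>V. W \<inter> {0..<k} = S \<and> cut_cost c (delta E W) = mincut V E {0..<k} c S"
proof -
  assume S: "S \<subseteq> {0..<k}"
  from mincut_in[OF S] obtain F where F: "F \<in> cutsets V E {0..<k} S" "mincut V E {0..<k} c S = cut_cost c F"
    by (rule imageE)
  from F(1) obtain W where W0: "W \<subseteq> V" "W \<inter> {0..<k} = S \<or> W \<inter> {0..<k} = {0..<k} - S" "F = delta E W"
    unfolding cutsets_def by blast
  have W: "W \<subseteq> V" "W \<inter> {0..<k} = S \<or> W \<inter> {0..<k} = {0..<k} - S"
    "cut_cost c (delta E W) = mincut V E {0..<k} c S" using W0 F by auto
  show ?thesis
  proof (cases "W \<inter> {0..<k} = S")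
    case True then show ?thesis using W by blast
  next
    case False
    then have "W \<inter> {0..<k} = {0..<k} - S" using W(2) by simp
    then have "(V - W) \<inter> {0..<k} = S" using S Tsub by blast
    moreover have "V - W \<subseteq> V" by blast
    ultimately show ?thesis using W(3) delta_compl[of W] by metis
  qed
qed

lemma mincut_sym: "S \<subseteq> {0..<k} \<Longrightarrow> mincut V E {0..<k} c ({0..<k} - S) = mincut V E {0..<k} c S"
proof -
  assume S: "S \<subseteq> {0..<k}"
  have "{0..<k} - ({0..<k} - S) = S" using S by auto
  then have "cutsets V E {0..<k} ({0..<k} - S) = cutsets V E {0..<k} S"
    unfolding cutsets_def by auto
  then show ?thesis by (simp add: mincut_def)
qed

lemma mincut_sub: "X \<subseteq> {0..<k} \<Longrightarrow> Y \<subseteq> {0..<k} \<Longrightarrow>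
  mincut V E {0..<k} c (X \<union> Y) \<le> mincut V E {0..<k} c X + mincut V E {0..<k} c Y"
proof -
  assume X: "X \<subseteq> {0..<k}" and Y: "Y \<subseteq> {0..<k}"
  obtain W1 where W1: "W1 \<subseteq> V" "W1 \<inter> {0..<k} = X" "cut_cost c (delta E W1) = mincut V E {0..<k} c X"
    using mincut_att[OF X] by blast
  obtain W2 where W2: "W2 \<subseteq> V" "W2 \<inter> {0..<k} = Y" "cut_cost c (delta E W2) = mincut V E {0..<k} c Y"
    using mincut_att[OF Y] by blast
  have "delta E (W1 \<union> W2) \<subseteq> delta E W1 \<union> delta E W2" by (auto simp: delta_def)
  then have "cut_cost c (delta E (W1 \<union> W2)) \<le> cut_cost c (delta E W1 \<union> delta E W2)"
    by (intro cost_mono) (auto simp: fin_delta)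
  also have "\<dots> \<le> cut_cost c (delta E W1) + cut_cost c (delta E W2)"
    by (intro cost_union fin_delta)
  finally have "cut_cost c (delta E (W1 \<union> W2)) \<le> mincut V E {0..<k} c X + mincut V E {0..<k} c Y"
    using W1 W2 by simp
  moreover have "mincut V E {0..<k} c (X \<union> Y) \<le> cut_cost c (delta E (W1 \<union> W2))"
    using W1 W2 by (intro mincut_le) auto
  ultimately show ?thesis by linarith
qed

lemma mincut_empty: "mincut V E {0..<k} c {} = 0"
proof -
  have "mincut V E {0..<k} c {} \<le> cut_cost c (delta E {})" by (intro mincut_le) auto
  moreover have "delta E {} = {}" by (auto simp: delta_def)
  ultimately show ?thesis by (simp add: cut_cost_def)
qed

lemma mincut_Union: "finite Q \<Longrightarrow> (\<forall>A\<in>Q. f A \<subseteq> {0..<k}) \<Longrightarrow>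
  mincut V E {0..<k} c (\<Union>A\<in>Q. f A) \<le> (\<Sum>A\<in>Q. mincut V E {0..<k} c (f A))"
proof (induction Q rule: finite_induct)
  case empty then show ?case by (simp add: mincut_empty)
next
  case (insert A Q)
  have "mincut V E {0..<k} c (\<Union>B\<in>insert A Q. f B) = mincut V E {0..<k} c (f A \<union> (\<Union>B\<in>Q. f B))" by simp
  also have "\<dots> \<le> mincut V E {0..<k} c (f A) + mincut V E {0..<k} c (\<Union>B\<in>Q. f B)"
    using insert by (intro mincut_sub) auto
  also have "\<dots> \<le> mincut V E {0..<k} c (f A) + (\<Sum>B\<in>Q. mincut V E {0..<k} c (f B))"
    using insert by auto
  finally show ?case using insert by simp
qed

lemma mincut_bound: "S \<subseteq> {0..<k} \<Longrightarrow> mincut V E {0..<k} c S \<le> cut_cost c E"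
proof -
  assume S: "S \<subseteq> {0..<k}"
  then have "mincut V E {0..<k} c S \<le> cut_cost c (delta E S)" using Tsub by (intro mincut_le) auto
  also have "\<dots> \<le> cut_cost c E" by (rule cost_mono[OF delta_sub finE])
  finally show ?thesis .
qed

lemma tie_key_enc: "finite F \<Longrightarrow> tie_key F = set_encode (prod_encode ` F)"
  unfolding tie_key_def set_encode_def
  by (simp add: sum.reindex inj_prod_encode)

lemma tie_inj: "finite F \<Longrightarrow> finite F' \<Longrightarrow> tie_key F = tie_key F' \<Longrightarrow> F = F'"
proof -
  assume f: "finite F" "finite F'" and t: "tie_key F = tie_key F'"
  then have "set_decode (set_encode (prod_encode ` F)) = set_decode (set_encode (prod_encode ` F'))"
    by (simp add: tie_key_enc)
  then have "prod_encode ` F = prod_encode ` F'" using f by simp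
  then show ?thesis by (simp add: inj_image_eq_iff inj_prod_encode)
qed

lemma cutset_E_in: "S \<subseteq> {0..<k} \<Longrightarrow> cutset_E V E {0..<k} c S \<in> min_cutsets V E {0..<k} c S"
proof -
  assume S: "S \<subseteq> {0..<k}"
  let ?M = "min_cutsets V E {0..<k} c S"
  have "?M \<subseteq> cutsets V E {0..<k} S" unfolding min_cutsets_def by (rule Collect_restrict)
  then have finM: "finite ?M" using cutsets_fin by (rule finite_subset)
  from mincut_in[OF S] obtain F1 where F1: "F1 \<in> cutsets V E {0..<k} S" "mincut V E {0..<k} c S = cut_cost c F1"
    by (rule imageE)
  then have "F1 \<in> ?M" unfolding min_cutsets_def by simp
  then have neM: "?M \<noteq> {}" by blast
  have subM: "finite F" if "F \<in> ?M" for F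
  proof -
    have "F \<in> cutsets V E {0..<k} S" using that by (simp add: min_cutsets_def)
    then show ?thesis using cutsets_sub finE finite_subset by blast
  qed
  obtain F0 where F0: "F0 \<in> ?M" "tie_key F0 = Min (tie_key ` ?M)"
  proof -
    have "Min (tie_key ` ?M) \<in> tie_key ` ?M" using finM neM by (intro Min_in) auto
    then obtain F where "F \<in> ?M" "Min (tie_key ` ?M) = tie_key F" by (auto simp del: Min_in)
    then show ?thesis using that by simp
  qed
  have F0min: "\<forall>F'\<in>?M. tie_key F0 \<le> tie_key F'"
  proof
    fix F' assume "F' \<in> ?M"
    from Min_le[OF finite_imageI[OF finM] imageI[OF this]] show "tie_key F0 \<le> tie_key F'"
      using F0(2) by simp
  qed
  have "\<exists>!F. F \<in> ?M \<and> (\<forall>F'\<in>?M. tie_key F \<le> tie_key F')"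
  proof (rule ex1I[of _ F0])
    show "F0 \<in> ?M \<and> (\<forall>F'\<in>?M. tie_key F0 \<le> tie_key F')" using F0 F0min by blast
  next
    fix F assume F: "F \<in> ?M \<and> (\<forall>F'\<in>?M. tie_key F \<le> tie_key F')"
    have a: "tie_key F \<le> tie_key F0" using F F0(1) by blast
    have b: "tie_key F0 \<le> tie_key F" using F F0min by blast
    from a b have "tie_key F = tie_key F0" by (rule antisym)
    moreover have "finite F" using subM F by blast
    moreover have "finite F0" using subM F0(1) by blast
    ultimately show "F = F0" using tie_inj by blast
  qed
  then show ?thesis unfolding cutset_E_def by (rule theI'[THEN conjunct1])
qed

lemma no_cross: "(u,v) \<in> (und (E - delta E U))\<^sup>* \<Longrightarrow> (u \<in> U) = (v \<in> U)"
proof (induction rule: rtrancl_induct)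
  case base then show ?case by simp
next
  case (step y z)
  then show ?case by (auto simp: und_def delta_def)
qed

lemma crossing: "(x,y) \<in> (und E)\<^sup>* \<Longrightarrow> x \<in> A \<Longrightarrow> y \<notin> A \<Longrightarrow> delta E A \<noteq> {}"
proof (induction rule: rtrancl_induct)
  case base then show ?case by simp
next
  case (step y z)
  show ?case
  proof (cases "y \<in> A")
    case True
    then show ?thesis using step by (auto simp: und_def delta_def)
  next
    case False then show ?thesis using step by blast
  qed
qed


lemma side:
  assumes S: "S \<subseteq> {0..<k}" "S \<noteq> {}" "S \<noteq> {0..<k}"
  and U: "U \<subseteq> V" "U \<inter> {0..<k} = S \<or> U \<inter> {0..<k} = {0..<k} - S"
  and F: "F = delta E U" and Fmin: "cut_cost c F = mincut V E {0..<k} c S"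
  and Q: "Q = {A \<in> V // Rel V E F. A \<subseteq> U}" and card: "2 \<le> card Q"
  shows "finite Q \<and> (\<forall>A\<in>Q. A \<inter> {0..<k} \<noteq> {} \<and> A \<inter> {0..<k} \<subseteq> U \<inter> {0..<k}
            \<and> mincut V E {0..<k} c (A \<inter> {0..<k}) < mincut V E {0..<k} c S)
     \<and> (\<forall>A\<in>Q. \<forall>B\<in>Q. A \<noteq> B \<longrightarrow> A \<inter> B = {})
     \<and> (\<Union>A\<in>Q. A \<inter> {0..<k}) = U \<inter> {0..<k}
     \<and> (\<Sum>A\<in>Q. mincut V E {0..<k} c (A \<inter> {0..<k})) = mincut V E {0..<k} c S"
proof -
  let ?T = "{0..<k}"
  let ?R = "Rel V E F"
  let ?mc = "mincut V E {0..<k} c"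
  have eqv: "equiv V ?R" by (rule Rel_equiv)
  have memR: "y \<in> ?R``{x} \<longleftrightarrow> x \<in> V \<and> y \<in> V \<and> (x,y) \<in> (und (E - F))\<^sup>*" for x y
    by (simp add: Rel_def)
  have clsU: "?R``{x} \<subseteq> U" if "x \<in> U" for x
  proof
    fix y assume "y \<in> ?R``{x}"
    then have "(x,y) \<in> (und (E - delta E U))\<^sup>*" using memR F by blast
    then show "y \<in> U" using no_cross that by blast
  qed
  have clsQ: "?R``{x} \<in> Q" if "x \<in> U" for x
    using clsU[OF that] that U(1) Q quotientI[of x V ?R] by blast
  have selfin: "x \<in> ?R``{x}" if "x \<in> V" for x using equiv_class_self[OF eqv that] .
  have finQ: "finite Q"
  proof -
    have "finite (V // ?R)" using finite_quotient[OF finV equiv_type[OF eqv]] .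
    then show ?thesis using Q by simp
  qed
  have AV: "A \<subseteq> V" if "A \<in> Q" for A
    using that Q by (auto elim!: quotientE simp: Rel_def)
  have Adisj: "A \<inter> B = {}" if "A \<in> Q" "B \<in> Q" "A \<noteq> B" for A B
    using quotient_disj[OF eqv, of A B] that Q by blast
  have AU: "A \<subseteq> U" if "A \<in> Q" for A using that Q by blast
  have dA: "delta E A \<subseteq> F" if A: "A \<in> Q" for A
  proof
    fix e assume e: "e \<in> delta E A"
    obtain p q where pq: "e = (p,q)" by (cases e)
    have eE: "(p,q) \<in> E" and ne: "(p \<in> A) \<noteq> (q \<in> A)" using e pq by (auto simp: delta_def)
    have pV: "p \<in> V" and qV: "q \<in> V" using edge_in[OF eE] by auto
    obtain x where x: "x \<in> V" "A = ?R``{x}" using A Q by (auto elim!: quotientE)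
    show "e \<in> F"
    proof (rule ccontr)
      assume "e \<notin> F"
      then have u1: "(p,q) \<in> und (E - F)" and u2: "(q,p) \<in> und (E - F)"
        using eE pq by (auto simp: und_def)
      show False
      proof (cases "p \<in> A")
        case True
        then have "(x,p) \<in> (und (E - F))\<^sup>*" using x memR by blast
        then have "(x,q) \<in> (und (E - F))\<^sup>*" using u1 by (rule rtrancl_into_rtrancl)
        then have "q \<in> A" using x memR qV by blast
        then show False using ne True by blast
      next
        case False
        then have "q \<in> A" using ne by blast
        then have "(x,q) \<in> (und (E - F))\<^sup>*" using x memR by blast
        then have "(x,p) \<in> (und (E - F))\<^sup>*" using u2 by (rule rtrancl_into_rtrancl)
        then have "p \<in> A" using x memR pV by blast
        then show False using False by blast
      qed
    qed
  qed
  have Fcov: "F = (\<Union>A\<in>Q. delta E A)"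
  proof
    show "(\<Union>A\<in>Q. delta E A) \<subseteq> F" using dA by blast
  next
    show "F \<subseteq> (\<Union>A\<in>Q. delta E A)"
    proof
      fix e assume e: "e \<in> F"
      obtain p q where pq: "e = (p,q)" by (cases e)
      have eE: "(p,q) \<in> E" and ne: "(p \<in> U) \<noteq> (q \<in> U)" using e pq F by (auto simp: delta_def)
      have pV: "p \<in> V" and qV: "q \<in> V" using edge_in[OF eE] by auto
      show "e \<in> (\<Union>A\<in>Q. delta E A)"
      proof (cases "p \<in> U")
        case True
        have "q \<notin> ?R``{p}" using clsU[OF True] ne True by blast
        then have "e \<in> delta E (?R``{p})" using selfin[OF pV] eE pq by (auto simp: delta_def)
        then show ?thesis using clsQ[OF True] by blast
      next
        case False
        then have qU: "q \<in> U" using ne by blast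
        have "p \<notin> ?R``{q}" using clsU[OF qU] False by blast
        then have "e \<in> delta E (?R``{q})" using selfin[OF qV] eE pq by (auto simp: delta_def)
        then show ?thesis using clsQ[OF qU] by blast
      qed
    qed
  qed
  have ddisj: "delta E A \<inter> delta E B = {}" if A: "A \<in> Q" and B: "B \<in> Q" and AB: "A \<noteq> B" for A B
  proof (rule ccontr)
    assume "delta E A \<inter> delta E B \<noteq> {}"
    then obtain e where eA: "e \<in> delta E A" and eB: "e \<in> delta E B" by blast
    have eF: "e \<in> delta E U" using dA[OF A] eA F by blast
    have d: "A \<inter> B = {}" using Adisj[OF A B AB] .
    have "A \<subseteq> U" "B \<subseteq> U" using AU A B by auto
    then show False using eA eB eF d unfolding delta_def by blast
  qed
  have costF: "cut_cost c F = (\<Sum>A\<in>Q. cut_cost c (delta E A))"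
  proof -
    have "cut_cost c F = sum c (\<Union>A\<in>Q. delta E A)" using Fcov by (simp add: cut_cost_def)
    also have "\<dots> = (\<Sum>A\<in>Q. sum c (delta E A))"
      using finQ fin_delta ddisj by (intro sum.UNION_disjoint) auto
    finally show ?thesis by (simp add: cut_cost_def)
  qed
  obtain y where y: "y \<in> ?T" "y \<notin> U"
  proof (cases "U \<inter> ?T = S")
    case True
    obtain y where "y \<in> ?T" "y \<notin> S" using S by blast
    then show ?thesis using that True by blast
  next
    case False
    then have "U \<inter> ?T = ?T - S" using U(2) by blast
    obtain y where "y \<in> S" using S by blast
    then show ?thesis using that \<open>U \<inter> ?T = ?T - S\<close> S(1) by blast
  qed
  have yV: "y \<in> V" using y Tsub by blast
  have dpos: "1 \<le> cut_cost c (delta E A)" if A: "A \<in> Q" for A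
  proof -
    obtain x where x: "x \<in> V" "A = ?R``{x}" using A Q by (auto elim!: quotientE)
    have "x \<in> A" using x selfin by blast
    moreover have "y \<notin> A" using AU[OF A] y by blast
    ultimately have "delta E A \<noteq> {}" using crossing[OF conn[OF x(1) yV]] by blast
    then obtain e where e: "e \<in> delta E A" by blast
    then have "1 \<le> c e" using wt delta_sub by blast
    also have "c e \<le> cut_cost c (delta E A)" unfolding cut_cost_def
      using e fin_delta by (intro member_le_sum) auto
    finally show ?thesis .
  qed
  have Aterm: "A \<inter> ?T \<noteq> {}" if A: "A \<in> Q" for A
  proof
    assume At: "A \<inter> ?T = {}"
    have W: "U - A \<subseteq> V" using U by blast
    have WT: "(U - A) \<inter> ?T = U \<inter> ?T" using At by blast
    have sub: "delta E (U - A) \<subseteq> F - delta E A"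
    proof
      fix e assume e: "e \<in> delta E (U - A)"
      have AsU: "A \<subseteq> U" using AU[OF A] .
      have dAF: "delta E A \<subseteq> delta E U" using dA[OF A] F by simp
      show "e \<in> F - delta E A"
        using e AsU dAF unfolding F delta_def by blast
    qed
    have "?mc S \<le> cut_cost c (delta E (U - A))"
      using W WT U(2) by (intro mincut_le) auto
    also have "\<dots> \<le> cut_cost c (F - delta E A)"
      using sub finE F by (intro cost_mono) (auto simp: fin_delta)
    also have "\<dots> = cut_cost c F - cut_cost c (delta E A)"
      unfolding cut_cost_def using dA[OF A] fin_delta by (intro sum_diff_nat) auto
    moreover have "cut_cost c (delta E A) \<le> cut_cost c F"
      using dA[OF A] F fin_delta by (intro cost_mono) auto
    ultimately show False using dpos[OF A] Fmin by linarith
  qed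
  have mcA: "?mc (A \<inter> ?T) \<le> cut_cost c (delta E A)" if A: "A \<in> Q" for A
    using AV[OF A] by (intro mincut_le) auto
  have sumle: "(\<Sum>A\<in>Q. ?mc (A \<inter> ?T)) \<le> ?mc S"
  proof -
    have "(\<Sum>A\<in>Q. ?mc (A \<inter> ?T)) \<le> (\<Sum>A\<in>Q. cut_cost c (delta E A))"
      using mcA by (intro sum_mono) auto
    then show ?thesis using costF Fmin by simp
  qed
  have Un: "(\<Union>A\<in>Q. A \<inter> ?T) = U \<inter> ?T"
  proof
    show "(\<Union>A\<in>Q. A \<inter> ?T) \<subseteq> U \<inter> ?T" using AU by blast
  next
    show "U \<inter> ?T \<subseteq> (\<Union>A\<in>Q. A \<inter> ?T)"
    proof
      fix t assume t: "t \<in> U \<inter> ?T"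
      then have "t \<in> ?R``{t}" using selfin Tsub by blast
      then show "t \<in> (\<Union>A\<in>Q. A \<inter> ?T)" using clsQ t by blast
    qed
  qed
  have mcU: "?mc (U \<inter> ?T) = ?mc S"
  proof (cases "U \<inter> ?T = S")
    case True then show ?thesis by simp
  next
    case False
    then have "U \<inter> ?T = ?T - S" using U(2) by blast
    then show ?thesis using mincut_sym[OF S(1)] by simp
  qed
  have sumge: "?mc S \<le> (\<Sum>A\<in>Q. ?mc (A \<inter> ?T))"
  proof -
    have "?mc (\<Union>A\<in>Q. A \<inter> ?T) \<le> (\<Sum>A\<in>Q. ?mc (A \<inter> ?T))"
      using finQ by (intro mincut_Union) auto
    then show ?thesis using Un mcU by simp
  qed
  have strict: "?mc (A \<inter> ?T) < ?mc S" if A: "A \<in> Q" for A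
  proof -
    have "Q - {A} \<noteq> {}"
    proof
      assume "Q - {A} = {}"
      then have "Q \<subseteq> {A}" by blast
      then have "card Q \<le> 1" using card_mono[of "{A}" Q] by simp
      then show False using card by simp
    qed
    then obtain B where B: "B \<in> Q" "B \<noteq> A" by blast
    have "(\<Sum>X\<in>{A,B}. cut_cost c (delta E X)) \<le> (\<Sum>X\<in>Q. cut_cost c (delta E X))"
      using A B finQ by (intro sum_mono2) auto
    then have "cut_cost c (delta E A) + cut_cost c (delta E B) \<le> cut_cost c F"
      using B costF by simp
    then show ?thesis using dpos[OF B(1)] mcA[OF A] Fmin by linarith
  qed
  show ?thesis using finQ Aterm strict Adisj Un sumle sumge AU by (auto intro: antisym)
qed


lemma cls_in: "y \<in> Rel V E (delta E U)``{x} \<Longrightarrow> (x \<in> U) = (y \<in> U) \<and> y \<in> V"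
  using no_cross by (auto simp: Rel_def)

lemma decomp:
  assumes S: "S \<subseteq> {0..<k}" "S \<noteq> {}" "S \<noteq> {0..<k}" and nT: "S \<notin> Te V E {0..<k} c"
  shows "\<exists>U Q. U \<subseteq> V \<and> (U \<inter> {0..<k} = S \<or> U \<inter> {0..<k} = {0..<k} - S) \<and> finite Q \<and>
     (\<forall>A\<in>Q. A \<inter> {0..<k} \<noteq> {} \<and> A \<inter> {0..<k} \<subseteq> U \<inter> {0..<k}
            \<and> mincut V E {0..<k} c (A \<inter> {0..<k}) < mincut V E {0..<k} c S)
     \<and> (\<forall>A\<in>Q. \<forall>B\<in>Q. A \<noteq> B \<longrightarrow> A \<inter> B = {})
     \<and> (\<Union>A\<in>Q. A \<inter> {0..<k}) = U \<inter> {0..<k}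
     \<and> (\<Sum>A\<in>Q. mincut V E {0..<k} c (A \<inter> {0..<k})) = mincut V E {0..<k} c S"
proof -
  let ?T = "{0..<k}"
  define F where "F = cutset_E V E ?T c S"
  have Fin: "F \<in> min_cutsets V E ?T c S" using cutset_E_in[OF S(1)] F_def by simp
  then have Fmin: "cut_cost c F = mincut V E ?T c S" and Fc: "F \<in> cutsets V E ?T S"
    by (auto simp: min_cutsets_def)
  from Fc obtain U0 where U0: "U0 \<subseteq> V" "U0 \<inter> ?T = S \<or> U0 \<inter> ?T = ?T - S" "F = delta E U0"
    unfolding cutsets_def by blast
  let ?R = "Rel V E F"
  have eqv: "equiv V ?R" by (rule Rel_equiv)
  have "card (CC V E F) \<noteq> 2" using nT S unfolding Te_def F_def by simp
  then have c2: "card (V // ?R) \<noteq> 2" by (simp add: CC_Rel)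
  define Q1 where "Q1 = {A \<in> V // ?R. A \<subseteq> U0}"
  define Q2 where "Q2 = {A \<in> V // ?R. A \<subseteq> V - U0}"
  have cov: "V // ?R = Q1 \<union> Q2"
  proof
    show "V // ?R \<subseteq> Q1 \<union> Q2"
    proof
      fix A assume A: "A \<in> V // ?R"
      then obtain x where x: "x \<in> V" "A = ?R``{x}" by (auto elim!: quotientE)
      have "\<forall>y\<in>A. (x \<in> U0) = (y \<in> U0) \<and> y \<in> V" using x cls_in U0(3) by blast
      then have "A \<subseteq> U0 \<or> A \<subseteq> V - U0" by blast
      then show "A \<in> Q1 \<union> Q2" using A Q1_def Q2_def by blast
    qed
  qed (auto simp: Q1_def Q2_def)
  have dis: "Q1 \<inter> Q2 = {}"
  proof -
    have "A = {}" if "A \<in> Q1" "A \<in> Q2" for A using that Q1_def Q2_def by blast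
    moreover have "A \<noteq> {}" if "A \<in> Q1" for A using that Q1_def in_quotient_imp_non_empty[OF eqv] by blast
    ultimately show ?thesis by blast
  qed
  have finq: "finite (V // ?R)" using finite_quotient[OF finV equiv_type[OF eqv]] .
  have fin1: "finite Q1" and fin2: "finite Q2" using finq cov by (auto intro: finite_subset)
  have "U0 \<inter> ?T \<noteq> {}"
  proof (cases "U0 \<inter> ?T = S")
    case True then show ?thesis using S by simp
  next
    case False
    then have "U0 \<inter> ?T = ?T - S" using U0(2) by blast
    then show ?thesis using S by auto
  qed
  then obtain t1 where t1: "t1 \<in> ?T" "t1 \<in> U0" by blast
  obtain t2 where t2: "t2 \<in> ?T" "t2 \<notin> U0"
  proof (cases "U0 \<inter> ?T = S")
    case True
    obtain y where "y \<in> ?T" "y \<notin> S" using S by blast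
    then show ?thesis using that True by blast
  next
    case False
    then have h: "U0 \<inter> ?T = ?T - S" using U0(2) by blast
    obtain y where "y \<in> S" using S by blast
    then show ?thesis using that h S(1) by blast
  qed
  have "?R``{t1} \<in> Q1"
  proof -
    have "t1 \<in> V" using t1 Tsub by blast
    moreover have "?R``{t1} \<subseteq> U0" using cls_in U0(3) t1 by blast
    moreover have "?R``{t1} \<in> V // ?R" using \<open>t1 \<in> V\<close> by (rule quotientI)
    ultimately show ?thesis unfolding Q1_def by blast
  qed
  then have "Q1 \<noteq> {}" by blast
  then have ne1: "card Q1 \<ge> 1" using fin1 by (simp add: Suc_le_eq card_gt_0_iff)
  have "?R``{t2} \<in> Q2"
  proof -
    have "t2 \<in> V" using t2 Tsub by blast
    moreover have "?R``{t2} \<subseteq> V - U0" using cls_in U0(3) t2 by blast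
    moreover have "?R``{t2} \<in> V // ?R" using \<open>t2 \<in> V\<close> by (rule quotientI)
    ultimately show ?thesis unfolding Q2_def by blast
  qed
  then have "Q2 \<noteq> {}" by blast
  then have ne2: "card Q2 \<ge> 1" using fin2 by (simp add: Suc_le_eq card_gt_0_iff)
  have "card Q1 + card Q2 \<noteq> 2" using c2 cov dis card_Un_disjoint[OF fin1 fin2] by simp
  then have "card Q1 \<ge> 2 \<or> card Q2 \<ge> 2" using ne1 ne2 by linarith
  then show ?thesis
  proof
    assume "card Q1 \<ge> 2"
    note X = side[OF S U0(1) U0(2) U0(3) Fmin Q1_def this]
    show ?thesis apply (rule exI[of _ U0]) apply (rule exI[of _ Q1])
      by (rule conjI[OF U0(1) conjI[OF U0(2) X]])
  next
    assume c: "card Q2 \<ge> 2"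
    have U1: "V - U0 \<subseteq> V" by blast
    have e: "(V - U0) \<inter> ?T = ?T - U0 \<inter> ?T" using Tsub by blast
    have U2: "(V - U0) \<inter> ?T = S \<or> (V - U0) \<inter> ?T = ?T - S"
    proof (cases "U0 \<inter> ?T = S")
      case True then show ?thesis using e by simp
    next
      case False
      then have "U0 \<inter> ?T = ?T - S" using U0(2) by blast
      then have "(V - U0) \<inter> ?T = S" using e S(1) by auto
      then show ?thesis by simp
    qed
    have U3: "F = delta E (V - U0)" using U0(3) delta_compl by simp
    note X = side[OF S U1 U2 U3 Fmin Q2_def c]
    show ?thesis apply (rule exI[of _ "V - U0"]) apply (rule exI[of _ Q2])
      by (rule conjI[OF U1 conjI[OF U2 X]])
  qed
qed

lemma ach_sound:
  assumes P: "P = {(S, mincut V E {0..<k} c S) | S. S \<in> Te V E {0..<k} c}"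
  shows "ach k P X v \<Longrightarrow> X \<subseteq> {0..<k} \<and> X \<noteq> {} \<and> X \<noteq> {0..<k} \<and> mincut V E {0..<k} c X \<le> v"
proof (induction rule: ach.induct)
  case (base X v)
  then show ?case using P by (auto simp: Te_def)
next
  case (compl X v)
  then show ?case using mincut_sym[of X] by auto
next
  case (union X v Y w)
  have "mincut V E {0..<k} c (X \<union> Y) \<le> mincut V E {0..<k} c X + mincut V E {0..<k} c Y"
    using union by (intro mincut_sub) auto
  then show ?case using union by auto
qed

lemma ach_complete:
  assumes P: "P = {(S, mincut V E {0..<k} c S) | S. S \<in> Te V E {0..<k} c}"
  shows "S \<subseteq> {0..<k} \<Longrightarrow> S \<noteq> {} \<Longrightarrow> S \<noteq> {0..<k} \<Longrightarrow> ach k P S (mincut V E {0..<k} c S)"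
proof (induction "mincut V E {0..<k} c S" arbitrary: S rule: less_induct)
  case less
  let ?T = "{0..<k}"
  let ?mc = "mincut V E {0..<k} c"
  show ?case
  proof (cases "S \<in> Te V E ?T c")
    case True
    then have "(S, mincut V E {0..<k} c S) \<in> P" using P by blast
    then show ?thesis by (rule ach.base)
  next
    case False
    from decomp[OF less.prems False] obtain U Q where UQ: "U \<subseteq> V" "U \<inter> ?T = S \<or> U \<inter> ?T = ?T - S"
      "finite Q" "\<forall>A\<in>Q. A \<inter> ?T \<noteq> {} \<and> A \<inter> ?T \<subseteq> U \<inter> ?T \<and> ?mc (A \<inter> ?T) < ?mc S"
      "(\<Union>A\<in>Q. A \<inter> ?T) = U \<inter> ?T" "(\<Sum>A\<in>Q. ?mc (A \<inter> ?T)) = ?mc S"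
      by (elim exE conjE) blast
    have UT: "U \<inter> ?T \<noteq> ?T" and UTne: "U \<inter> ?T \<noteq> {}"
      using ntriv[OF less.prems UQ(2)] by auto
    have gen: "Q' \<subseteq> Q \<Longrightarrow> ach k P (\<Union>A\<in>Q'. A \<inter> ?T) (\<Sum>A\<in>Q'. ?mc (A \<inter> ?T))"
      if "finite Q'" "Q' \<noteq> {}" for Q'
      using that
    proof (induction Q' rule: finite_ne_induct)
      case (singleton A)
      then have A: "A \<in> Q" by simp
      have "ach k P (A \<inter> ?T) (?mc (A \<inter> ?T))"
        using less.hyps[of "A \<inter> ?T"] UQ(4) A UT by blast
      then show ?case by simp
    next
      case (insert A Q')
      have A: "A \<in> Q" using insert by simp
      have IH: "ach k P (\<Union>B\<in>Q'. B \<inter> ?T) (\<Sum>B\<in>Q'. ?mc (B \<inter> ?T))" using insert by blast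
      have hA: "ach k P (A \<inter> ?T) (?mc (A \<inter> ?T))"
        using less.hyps[of "A \<inter> ?T"] UQ(4) A UT by blast
      have "(A \<inter> ?T) \<union> (\<Union>B\<in>Q'. B \<inter> ?T) \<subseteq> U \<inter> ?T" using UQ(4) insert by blast
      then have "(A \<inter> ?T) \<union> (\<Union>B\<in>Q'. B \<inter> ?T) \<noteq> ?T" using UT by blast
      from ach.union[OF hA IH this] show ?case using insert by simp
    qed
    have "Q \<noteq> {}" using UQ(5) UTne by auto
    from gen[OF UQ(3) this] have "ach k P (U \<inter> ?T) (?mc S)" using UQ(5) UQ(6) by simp
    then show ?thesis
    proof (cases "U \<inter> ?T = S")
      case True then show ?thesis using \<open>ach k P (U \<inter> ?T) (?mc S)\<close> by simp
    next
      case False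
      then have "U \<inter> ?T = ?T - S" using UQ(2) by blast
      then have "ach k P (?T - S) (?mc S)" using \<open>ach k P (U \<inter> ?T) (?mc S)\<close> by simp
      from ach.compl[OF this] show ?thesis using less.prems by (simp add: Diff_Diff_Int inf.absorb2)
    qed
  qed
qed

lemma Te_ne_aux: "S \<subseteq> {0..<k} \<Longrightarrow> S \<noteq> {} \<Longrightarrow> S \<noteq> {0..<k} \<Longrightarrow> Te V E {0..<k} c \<noteq> {}"
proof (induction "mincut V E {0..<k} c S" arbitrary: S rule: less_induct)
  case less
  show ?case
  proof (cases "S \<in> Te V E {0..<k} c")
    case True then show ?thesis by blast
  next
    case False
    from decomp[OF less.prems False] obtain U Q where UQ: "U \<subseteq> V" "U \<inter> {0..<k} = S \<or> U \<inter> {0..<k} = {0..<k} - S"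
      "\<forall>A\<in>Q. A \<inter> {0..<k} \<noteq> {} \<and> A \<inter> {0..<k} \<subseteq> U \<inter> {0..<k} \<and> mincut V E {0..<k} c (A \<inter> {0..<k}) < mincut V E {0..<k} c S"
      "(\<Union>A\<in>Q. A \<inter> {0..<k}) = U \<inter> {0..<k}"
      by (elim exE conjE) blast
    have UT: "U \<inter> {0..<k} \<noteq> {0..<k}" and "U \<inter> {0..<k} \<noteq> {}"
      using ntriv[OF less.prems UQ(2)] by auto
    then have "Q \<noteq> {}" using UQ(4) by auto
    then obtain A where A: "A \<in> Q" by blast
    have A1: "A \<inter> {0..<k} \<noteq> {}" "A \<inter> {0..<k} \<subseteq> U \<inter> {0..<k}"
       "mincut V E {0..<k} c (A \<inter> {0..<k}) < mincut V E {0..<k} c S" using UQ(3) A by auto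
    have A2: "A \<inter> {0..<k} \<noteq> {0..<k}" using A1(2) UT by blast
    show ?thesis by (rule less.hyps[OF A1(3) _ A1(1) A2]) blast
  qed
qed

lemma Te_ne: "2 \<le> k \<Longrightarrow> Te V E {0..<k} c \<noteq> {}"
proof -
  assume k: "2 \<le> k"
  have "{0} \<subseteq> {0..<k}" using k by simp
  moreover have "{0} \<noteq> {0..<k}"
  proof
    assume "{0} = {0..<k}"
    then have "1 \<in> {0::nat}" using k by (metis atLeastLessThan_iff le0 less_le_trans one_less_numeral_iff semiring_norm(76))
    then show False by simp
  qed
  ultimately show ?thesis using Te_ne_aux by blast
qed

end

fun pairs :: "nat list \<Rightarrow> (nat \<times> nat) list" where
  "pairs (x # y # r) = (x,y) # pairs r"
| "pairs _ = []"

definition flat :: "(nat \<times> nat) list \<Rightarrow> nat list" where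
  "flat t = concat (map (\<lambda>(x,v). [x,v]) t)"

lemma pairs_flat: "pairs (flat t) = t"
  by (induction t) (auto simp: flat_def)

lemma len_flat: "length (gcodes (flat t)) =
   (\<Sum>p\<leftarrow>t. (2 * length (bits (fst p)) + 1) + (2 * length (bits (snd p)) + 1))"
  by (induction t) (auto simp: flat_def gcodes_def gcode_def)

lemma sum_list_bound: "(\<forall>x\<in>set xs. f x \<le> (B::real)) \<Longrightarrow> sum_list (map f xs) \<le> real (length xs) * B"
  by (induction xs) (auto simp: algebra_simps)

definition Rq :: "nat set \<Rightarrow> bool list \<Rightarrow> nat" where
  "Rq S M = (let L = (THE L. gcodes L = M) in
     LEAST v. ach (hd L) ((\<lambda>(x,v). (set_decode x, v)) ` set (pairs (tl L))) S v)"

theorem theorem5p2: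
  fixes a :: real
  assumes "a \<ge> 1"
  shows "\<exists>C::real. \<exists>R :: nat set \<Rightarrow> bool list \<Rightarrow> nat.
    \<forall>V E k c. network V E k \<and> (\<forall>e\<in>E. 1 \<le> c e \<and> real (c e) \<le> real (card V) powr a) \<longrightarrow>
      (\<exists>M :: bool list.
         real (length M) \<le> C * real (card (Te V E {0..<k} c)) * (real k + log 2 (real (card V))) \<and>
         (\<forall>S. S \<subseteq> {0..<k} \<and> S \<noteq> {} \<and> S \<noteq> {0..<k} \<longrightarrow> R S M = mincut V E {0..<k} c S))"
proof (intro exI[of _ "2 * a + 11"] exI[of _ Rq] allI impI)
  fix V E k c
  assume H: "network V E k \<and> (\<forall>e\<in>E. 1 \<le> c e \<and> real (c e) \<le> real (card V) powr a)"
  then have net: "network V E k" and wt: "\<forall>e\<in>E. 1 \<le> c e"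
    and cb: "\<forall>e\<in>E. real (c e) \<le> real (card V) powr a" by auto
  let ?n = "card V"
  let ?T = "{0..<k}"
  let ?Te = "Te V E {0..<k} c"
  let ?mc = "mincut V E {0..<k} c"
  let ?Lg = "log 2 (real ?n)"
  have n1: "?n \<ge> 1" using net finV[OF net wt] by (simp add: network_def Suc_le_eq card_gt_0_iff)
  have Lg0: "?Lg \<ge> 0" using n1 by simp
  have a0: "2 * a + 11 \<ge> 0" using assms by simp
  show "\<exists>M. real (length M) \<le> (2 * a + 11) * real (card ?Te) * (real k + ?Lg) \<and>
         (\<forall>S. S \<subseteq> ?T \<and> S \<noteq> {} \<and> S \<noteq> ?T \<longrightarrow> Rq S M = ?mc S)"
  proof (cases "k < 2")
    case True
    have "\<not> (S \<subseteq> ?T \<and> S \<noteq> {} \<and> S \<noteq> ?T)" for S :: "nat set"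
    proof
      assume S: "S \<subseteq> ?T \<and> S \<noteq> {} \<and> S \<noteq> ?T"
      show False
      proof (cases "k = 0")
        case True then show False using S by simp
      next
        case False
        then have "k = 1" using \<open>k < 2\<close> by simp
        then have "?T = {0}" by auto
        then show False using S by auto
      qed
    qed
    moreover have "0 \<le> (2 * a + 11) * real (card ?Te) * (real k + ?Lg)"
      using a0 Lg0 by simp
    ultimately show ?thesis by (intro exI[of _ "[]"]) auto
  next
    case False
    then have k2: "2 \<le> k" by simp
    have finTe: "finite ?Te"
    proof -
      have "?Te \<subseteq> Pow ?T" by (auto simp: Te_def)
      then show ?thesis by (rule finite_subset) simp
    qed
    obtain xs where xs: "distinct xs" "set xs = ?Te" using finite_distinct_list[OF finTe] by blast
    define tbl where "tbl = map (\<lambda>S. (set_encode S, ?mc S)) xs"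
    define L where "L = k # flat tbl"
    define M where "M = gcodes L"
    have theL: "(THE L'. gcodes L' = M) = L"
      using gcodes_inj M_def by (intro the_equality) auto
    define P where "P = {(S, ?mc S) | S. S \<in> ?Te}"
    have PP: "(\<lambda>(x,v). (set_decode x, v)) ` set (pairs (tl L)) = P"
    proof -
      have fin: "finite S" if "S \<in> ?Te" for S
        using that by (auto simp: Te_def intro: finite_subset)
      have "set (pairs (tl L)) = (\<lambda>S. (set_encode S, ?mc S)) ` ?Te"
        by (simp add: L_def pairs_flat tbl_def xs)
      then have "(\<lambda>(x,v). (set_decode x, v)) ` set (pairs (tl L)) = (\<lambda>S. (set_decode (set_encode S), ?mc S)) ` ?Te"
        by (simp add: image_image)
      also have "\<dots> = (\<lambda>S. (S, ?mc S)) ` ?Te"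
        using fin by (intro image_cong) auto
      also have "\<dots> = P" by (auto simp: P_def)
      finally show ?thesis .
    qed
    have query: "Rq S M = ?mc S" if S: "S \<subseteq> ?T" "S \<noteq> {}" "S \<noteq> ?T" for S
    proof -
      have "Rq S M = (LEAST v. ach k P S v)" unfolding Rq_def theL PP[symmetric] by (simp add: L_def)
      also have "\<dots> = ?mc S"
      proof (rule Least_equality)
        show "ach k P S (?mc S)" using ach_complete[OF net wt P_def S] .
        show "?mc S \<le> y" if "ach k P S y" for y using ach_sound[OF net wt P_def that] by simp
      qed
      finally show ?thesis .
    qed
    have t1: "card ?Te \<ge> 1" using Te_ne[OF net wt k2] finTe by (simp add: Suc_le_eq card_gt_0_iff)
    have blk: "length (bits k) \<le> k" by (rule bits_len_less) simp
    have blS: "length (bits (set_encode S)) \<le> k" if "S \<in> ?Te" for S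
      using that by (intro bits_len_less set_encode_lt) (auto simp: Te_def)
    have cardE: "card E \<le> ?n * ?n"
    proof -
      have "E \<subseteq> V \<times> V" by (rule Esub[OF net wt])
      then have "card E \<le> card (V \<times> V)" using finV[OF net wt] by (intro card_mono) auto
      then show ?thesis by (simp add: card_cartesian_product)
    qed
    have costE: "real (cut_cost c E) \<le> real ?n ^ 2 * real ?n powr a"
    proof -
      have "real (cut_cost c E) = (\<Sum>e\<in>E. real (c e))" by (simp add: cut_cost_def)
      also have "\<dots> \<le> real (card E) * real ?n powr a" using cb by (intro sum_bounded_above) auto
      also have "\<dots> \<le> real ?n ^ 2 * real ?n powr a"
        using cardE by (intro mult_right_mono) (auto simp: power2_eq_square simp flip: of_nat_mult)
      finally show ?thesis .
    qed
    have blm: "real (length (bits (?mc S))) \<le> (a + 2) * ?Lg + 1" if "S \<in> ?Te" for S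
    proof (cases "?mc S = 0")
      case True
      then show ?thesis using Lg0 assms by (simp add: bits.simps)
    next
      case False
      have ST: "S \<subseteq> ?T" using that by (simp add: Te_def)
      have "real (?mc S) \<le> real (cut_cost c E)" using mincut_bound[OF net wt ST] by simp
      also have "\<dots> \<le> real ?n ^ 2 * real ?n powr a" by (rule costE)
      finally have mb: "real (?mc S) \<le> real ?n ^ 2 * real ?n powr a" .
      have "real (length (bits (?mc S))) \<le> log 2 (real (?mc S)) + 1"
        using False by (intro bits_len_log) simp
      also have "log 2 (real (?mc S)) \<le> log 2 (real ?n ^ 2 * real ?n powr a)"
        using False mb by (subst log_le_cancel_iff) auto
      also have "log 2 (real ?n ^ 2 * real ?n powr a) = 2 * ?Lg + a * ?Lg"
        using n1 by (simp add: log_mult log_powr log_nat_power)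
      finally show ?thesis by (simp add: algebra_simps)
    qed
    have entry: "real ((2 * length (bits (fst p)) + 1) + (2 * length (bits (snd p)) + 1))
        \<le> 2 * real k + 4 + (2 * a + 4) * ?Lg" if pin: "p \<in> set tbl" for p
    proof -
      obtain S where S: "S \<in> ?Te" "p = (set_encode S, ?mc S)" using pin xs by (auto simp: tbl_def)
      show ?thesis using blS[OF S(1)] blm[OF S(1)] S(2) by (simp add: algebra_simps)
    qed
    have "length M = (2 * length (bits k) + 1) + length (gcodes (flat tbl))"
      by (simp add: M_def L_def gcodes_def gcode_def)
    then have "real (length M) = real (2 * length (bits k) + 1) +
        (\<Sum>p\<leftarrow>tbl. real ((2 * length (bits (fst p)) + 1) + (2 * length (bits (snd p)) + 1)))"
      by (simp add: len_flat flip: sum_list_of_nat add: o_def)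
    also have "\<dots> \<le> (2 * real k + 1) + real (length tbl) * (2 * real k + 4 + (2 * a + 4) * ?Lg)"
      using blk entry by (intro add_mono sum_list_bound) auto
    also have "length tbl = card ?Te" using xs by (simp add: tbl_def distinct_card[symmetric])
    finally have lenM: "real (length M) \<le> 2 * real k + 1 + real (card ?Te) * (2 * real k + 4 + (2 * a + 4) * ?Lg)" .
    define t where "t = real (card ?Te)"
    have t1': "t \<ge> 1" using t1 t_def by simp
    have k2': "real k \<ge> 2" using k2 by simp
    have "2 * real k + 1 \<le> t * (2 * real k + 1)" using t1' k2' by (simp add: mult_le_cancel_right1)
    then have "real (length M) \<le> t * (4 * real k + 5 + (2 * a + 4) * ?Lg)"
      using lenM t_def by (simp add: algebra_simps)
    also have "\<dots> \<le> t * ((2 * a + 11) * (real k + ?Lg))"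
    proof (rule mult_left_mono)
      have "0 \<le> 2 * a * real k" using assms by simp
      moreover have "(2 * a + 11) * real k = 2 * a * real k + 11 * real k" by (simp add: algebra_simps)
      ultimately have "4 * real k + 5 \<le> (2 * a + 11) * real k" using k2' by linarith
      moreover have "(2 * a + 4) * ?Lg \<le> (2 * a + 11) * ?Lg" using Lg0 by (intro mult_right_mono) auto
      ultimately show "4 * real k + 5 + (2 * a + 4) * ?Lg \<le> (2 * a + 11) * (real k + ?Lg)"
        by (simp add: algebra_simps)
      show "0 \<le> t" using t1' by simp
    qed
    finally have "real (length M) \<le> (2 * a + 11) * real (card ?Te) * (real k + ?Lg)"
      by (simp add: t_def algebra_simps)
    then show ?thesis using query by blast
  qed
qed

end
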